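(* Let $K$ be an algebraically closed field of characteristic zero, $\mathcal{K}=K(t)$, $\alpha \in \mathcal{K}$, and $M \ge 0$. Then $\alpha$ realizes portrait $(M,3)$ for $f_2(z) = z^2+t$ if and only if $(\alpha,M) \ne (0,1)$.
   Context: For $c \in K$, let $f_{2,c}(z) = z^2+c$. A point $x$ has preperiodic portrait $(M,N)$ for $\phi$ if $M\ge0$ is minimal with $\phi^M(x)$ periodic and $\phi^M(x)$ has exact period $N$. We say $\alpha\in\mathcal{K}$ realizes portrait $(M,N)$ for $f_2$ if there exists $c \in K$ such that $\alpha(c)\in\mathbb{P}^1(K)$ (reduction modulo the place $t=c$) has portrait $(M,N)$ for $f_{2,c}$. *)

theory Defs
  imports "HOL-Computational_Algebra.Polynomial" "HOL-Computational_Algebra.Fraction_Field"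
begin

text \<open>The rational function field K(t) is modelled as the fraction field 'k poly fract.
  Points of P^1(K) are 'k option, with None playing the role of infinity.\<close>

text \<open>Reduction of alpha in K(t) modulo the place t = c: if alpha = p/q with q(c) nonzero,
  its value is p(c)/q(c) (independent of the representation); otherwise alpha has a pole
  at c and the value is infinity.\<close>
definition place_eval :: "'k::field poly fract \<Rightarrow> 'k \<Rightarrow> 'k option" where
  "place_eval \<alpha> c =
     (if \<exists>p q. \<alpha> = Fract p q \<and> poly q c \<noteq> 0
      then Some (THE v. \<exists>p q. \<alpha> = Fract p q \<and> poly q c \<noteq> 0 \<and> v = poly p c / poly q c)
      else None)"

definition f2 :: "'k::field \<Rightarrow> 'k option \<Rightarrow> 'k option" where
  "f2 c x = (case x of None \<Rightarrow> None | Some z \<Rightarrow> Some (z ^ 2 + c))"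

definition is_periodic :: "('a \<Rightarrow> 'a) \<Rightarrow> 'a \<Rightarrow> bool" where
  "is_periodic \<phi> y \<longleftrightarrow> (\<exists>n>0. (\<phi> ^^ n) y = y)"

definition exact_period :: "('a \<Rightarrow> 'a) \<Rightarrow> 'a \<Rightarrow> nat \<Rightarrow> bool" where
  "exact_period \<phi> y N \<longleftrightarrow> N > 0 \<and> (\<phi> ^^ N) y = y \<and> (\<forall>k. 0 < k \<and> k < N \<longrightarrow> (\<phi> ^^ k) y \<noteq> y)"

definition has_portrait :: "('a \<Rightarrow> 'a) \<Rightarrow> 'a \<Rightarrow> nat \<Rightarrow> nat \<Rightarrow> bool" where
  "has_portrait \<phi> x M N \<longleftrightarrow>
     is_periodic \<phi> ((\<phi> ^^ M) x) \<and> (\<forall>m<M. \<not> is_periodic \<phi> ((\<phi> ^^ m) x)) \<and>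
     exact_period \<phi> ((\<phi> ^^ M) x) N"

definition realizes_f2 :: "'k::field poly fract \<Rightarrow> nat \<Rightarrow> nat \<Rightarrow> bool" where
  "realizes_f2 \<alpha> M N \<longleftrightarrow> (\<exists>c. has_portrait (f2 c) (place_eval \<alpha> c) M N)"

end

theory Submission
  imports Defs
begin


lemma alg_closed_sum_order:
  fixes p :: "'a :: alg_closed_field poly"
  assumes "p \<noteq> 0"
  shows   "(\<Sum>x | poly p x = 0. order x p) = degree p"
  using assms
proof (induction "degree p" arbitrary: p rule: less_induct)
  case (less p)
  show ?case
  proof (cases "\<exists>x. poly p x = 0")
    case False
    hence "degree p = 0" using alg_closed_imp_poly_has_root by blast
    thus ?thesis using False
      by auto
  next
    case True
    then obtain x where x: "poly p x = 0"
      by auto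
    have "[:-x, 1:] ^ order x p dvd p"
      by (simp add: order_1)
    then obtain q where q: "p = [:-x, 1:] ^ order x p * q"
      by (elim dvdE)
    have [simp]: "q \<noteq> 0"
      using q less.prems by auto
    have "order x p = order x p + order x q"
      by (subst q, subst order_mult) (auto simp: order_power_n_n)
    hence "order x q = 0"
      by auto
    hence [simp]: "poly q x \<noteq> 0"
      by (simp add: order_root)
    have deg_p: "degree p = degree q + order x p"
      by (subst q, subst degree_mult_eq) (auto simp: degree_power_eq)
    moreover have "order x p > 0"
      using x less.prems by (simp add: order_root)
    ultimately have "degree q < degree p"
      by linarith
    hence "(\<Sum>x | poly q x = 0. order x q) = degree q"
      by (intro less.hyps) auto
    hence "order x p + (\<Sum>x | poly q x = 0. order x q) = degree p"
      by (simp add: deg_p)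
    also have "{y. poly q y = 0} = {y. poly p y = 0} - {x}"
      by (subst q) auto
    also have "(\<Sum>y \<in> {y. poly p y = 0} - {x}. order y q) =
               (\<Sum>y \<in> {y. poly p y = 0} - {x}. order y p)"
      by (intro sum.cong refl, subst q)
         (auto simp: order_mult order_power_n_n intro!: order_0I)
    also have "order x p + \<dots> = (\<Sum>y \<in> insert x ({y. poly p y = 0} - {x}). order y p)"
      using \<open>p \<noteq> 0\<close> by (subst sum.insert) (auto simp: poly_roots_finite)
    also have "insert x ({y. poly p y = 0} - {x}) = {y. poly p y = 0}"
      using \<open>poly p x = 0\<close> by auto
    finally show ?thesis .
  qed
qed

lemma order_ge_dvd:
  fixes W :: "'a :: idom poly"
  assumes "W \<noteq> 0" "[:-x,1:]^n dvd W" shows "n \<le> order x W"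
  using assms order_divides by blast

lemma mason:
  fixes a b c :: "'a :: {alg_closed_field, field_char_0} poly"
  assumes sum0: "a + b + c = 0" and cop: "\<And>x. \<not> (poly a x = 0 \<and> poly b x = 0)" and dega: "degree a > 0"
  shows "degree a < card {x. poly (a*b*c) x = 0}"
proof -
  have a0: "a \<noteq> 0" using dega by auto
  obtain x0 where x0: "poly a x0 = 0" using alg_closed_imp_poly_has_root[OF dega] by blast
  have b0: "b \<noteq> 0"
  proof
    assume "b = 0"
    thus False using cop[of x0] x0 by simp
  qed
  have c0: "c \<noteq> 0"
  proof
    assume "c = 0"
    hence "b = - a" using sum0 by (simp add: eq_neg_iff_add_eq_0 add.commute)
    thus False using cop[of x0] x0 by simp
  qed
  have cdef: "c = - a - b" using sum0 by (simp add: eq_neg_iff_add_eq_0 algebra_simps)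
  define W where "W = pderiv a * b - a * pderiv b"
  have W2: "W = pderiv b * c - b * pderiv c"
    unfolding W_def cdef by (simp add: pderiv_diff pderiv_minus algebra_simps)
  have W3: "W = pderiv c * a - c * pderiv a"
    unfolding W_def cdef by (simp add: pderiv_diff pderiv_minus algebra_simps)
  have W0: "W \<noteq> 0"
  proof
    assume "W = 0"
    hence eq: "a * pderiv b = pderiv a * b" unfolding W_def by simp
    have pa0: "pderiv a \<noteq> 0" using dega by (simp add: pderiv_eq_0_iff)
    have bx0: "poly b x0 \<noteq> 0" using cop[of x0] x0 by simp
    have ob: "order x0 b = 0" using bx0 by (rule order_0I)
    have oa: "order x0 a = Suc (order x0 (pderiv a))" using order_pderiv[OF a0 x0] .
    have rhs0: "pderiv a * b \<noteq> 0" using pa0 b0 by simp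
    hence lhs0: "a * pderiv b \<noteq> 0" using eq by simp
    hence pb0: "pderiv b \<noteq> 0" by auto
    have "order x0 (a * pderiv b) = order x0 a + order x0 (pderiv b)"
      using a0 pb0 by (simp add: order_mult)
    moreover have "order x0 (pderiv a * b) = order x0 (pderiv a)"
      using pa0 b0 ob by (simp add: order_mult)
    ultimately show False using eq oa by simp
  qed
  have nodeg0: "degree b + degree c > 0"
  proof (rule ccontr)
    assume "\<not> ?thesis"
    hence "pderiv b = 0" "pderiv c = 0" by (auto simp: pderiv_eq_0_iff)
    hence "W = 0" using W2 by simp
    thus False using W0 by simp
  qed
  define R where "R = {x. poly (a*b*c) x = 0}"
  have abc0: "a*b*c \<noteq> 0" using a0 b0 c0 by simp
  have finR: "finite R" unfolding R_def using poly_roots_finite[OF abc0] .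
  have key: "order x (a*b*c) \<le> Suc (order x W)" if "x \<in> R" for x
  proof -
    have ordabc: "order x (a*b*c) = order x a + order x b + order x c"
      using a0 b0 c0 by (simp add: order_mult)
    have notab: "\<not> (poly a x = 0 \<and> poly b x = 0)" by (rule cop)
    have rootc: "poly c x = - poly a x - poly b x" using cdef by simp
    show ?thesis
    proof (cases "poly a x = 0")
      case True
      hence ob: "order x b = 0" "order x c = 0" using notab rootc by (auto intro!: order_0I)
      have oa: "order x a = Suc (order x (pderiv a))" using order_pderiv[OF a0 True] .
      define n where "n = order x (pderiv a)"
      have d1: "[:-x,1:]^n dvd pderiv a" unfolding n_def by (rule order_1)
      have d2: "[:-x,1:]^n dvd a"
        by (rule dvd_trans[OF _ order_1[of x a]]) (rule le_imp_power_dvd, simp add: oa n_def)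
      have "[:-x,1:]^n dvd W" unfolding W_def using d1 d2
        by (simp add: dvd_diff dvd_mult2 dvd_mult)
      hence "n \<le> order x W" using order_ge_dvd W0 by blast
      thus ?thesis using ordabc ob oa n_def by simp
    next
      case False
      show ?thesis
      proof (cases "poly b x = 0")
        case True
        hence ob: "order x a = 0" "order x c = 0" using False rootc by (auto intro!: order_0I)
        have oa: "order x b = Suc (order x (pderiv b))" using order_pderiv[OF b0 True] .
        define n where "n = order x (pderiv b)"
        have d1: "[:-x,1:]^n dvd pderiv b" unfolding n_def by (rule order_1)
        have d2: "[:-x,1:]^n dvd b"
          by (rule dvd_trans[OF _ order_1[of x b]]) (rule le_imp_power_dvd, simp add: oa n_def)
        have "[:-x,1:]^n dvd W" unfolding W_def using d1 d2
          by (simp add: dvd_diff dvd_mult2 dvd_mult)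
        hence "n \<le> order x W" using order_ge_dvd W0 by blast
        thus ?thesis using ordabc ob oa n_def by simp
      next
        case False2: False
        have True: "poly c x = 0" using that False False2 unfolding R_def by simp
        hence ob: "order x a = 0" "order x b = 0" using False False2 by (auto intro!: order_0I)
        have oa: "order x c = Suc (order x (pderiv c))" using order_pderiv[OF c0 True] .
        define n where "n = order x (pderiv c)"
        have d1: "[:-x,1:]^n dvd pderiv c" unfolding n_def by (rule order_1)
        have d2: "[:-x,1:]^n dvd c"
          by (rule dvd_trans[OF _ order_1[of x c]]) (rule le_imp_power_dvd, simp add: oa n_def)
        have "[:-x,1:]^n dvd W" unfolding W3 using d1 d2
          by (simp add: dvd_diff dvd_mult2 dvd_mult)
        hence "n \<le> order x W" using order_ge_dvd W0 by blast
        thus ?thesis using ordabc ob oa n_def by simp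
      qed
    qed
  qed
  have "degree (a*b*c) = (\<Sum>x\<in>R. order x (a*b*c))"
    unfolding R_def using alg_closed_sum_order[OF abc0] by simp
  also have "\<dots> \<le> (\<Sum>x\<in>R. Suc (order x W))" by (intro sum_mono key)
  also have "\<dots> = card R + (\<Sum>x\<in>R. order x W)" unfolding Suc_eq_plus1 sum.distrib by (simp add: add.commute)
  also have "(\<Sum>x\<in>R. order x W) \<le> (\<Sum>x | poly W x = 0. order x W)"
  proof -
    have "(\<Sum>x\<in>R. order x W) = (\<Sum>x\<in>R \<inter> {x. poly W x = 0}. order x W)"
      using finR by (intro sum.mono_neutral_right) (auto simp: order_root)
    also have "\<dots> \<le> (\<Sum>x | poly W x = 0. order x W)"
      using poly_roots_finite[OF W0] by (intro sum_mono2) auto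
    finally show ?thesis .
  qed
  also have "(\<Sum>x | poly W x = 0. order x W) \<le> degree W" by (rule sum_order_le_degree[OF W0])
  also have "degree W \<le> degree b + degree c - 1"
  proof -
    have "degree (pderiv b * c) \<le> degree b + degree c - 1"
    proof (cases "degree b = 0")
      case True thus ?thesis by (simp add: pderiv_eq_0_iff[THEN iffD2])
    next
      case False thus ?thesis using degree_mult_le[of "pderiv b" c] by (simp add: degree_pderiv)
    qed
    moreover have "degree (b * pderiv c) \<le> degree b + degree c - 1"
    proof (cases "degree c = 0")
      case True thus ?thesis by (simp add: pderiv_eq_0_iff[THEN iffD2])
    next
      case False thus ?thesis using degree_mult_le[of b "pderiv c"] by (simp add: degree_pderiv)
    qed
    ultimately show ?thesis unfolding W2 using degree_diff_le by blast
  qed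
  finally have "degree (a*b*c) \<le> card R + (degree b + degree c - 1)" by simp
  moreover have "degree (a*b*c) = degree a + degree b + degree c"
    using a0 b0 c0 by (simp add: degree_mult_eq)
  ultimately show ?thesis using nodeg0 unfolding R_def by linarith
qed




definition "uu = [:-1,-4,-9,-8,-4,-2,-1:]"
definition "vv = [:0,0,4,8,4:]"
definition "dd = [:0,2,2:]"
definition "g0 = [:1,1,2,1:]"
definition "g1 = [:-1,-1,0,1:]"
definition "g2 = [:-1,-3,-2,-1:]"
definition "hom r m = (\<Sum>k\<le>m. smult (coeff r k) (uu^k * vv^(m-k)))"
definition "sg s = - (s+1) / s"

lemma ev_uu: "poly uu (s::'a::field) = - (s^6+2*s^5+4*s^4+8*s^3+9*s^2+4*s+1)"
  by (simp add: uu_def eval_nat_numeral; algebra)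
lemma ev_vv: "poly vv (s::'a::field) = 4*s^2*(s+1)^2"
  by (simp add: vv_def eval_nat_numeral; algebra)
lemma ev_dd: "poly dd (s::'a::field) = 2*s*(s+1)"
  by (simp add: dd_def eval_nat_numeral; algebra)
lemma ev_g0: "poly g0 (s::'a::field) = s^3+2*s^2+s+1"
  by (simp add: g0_def eval_nat_numeral; algebra)
lemma ev_g1: "poly g1 (s::'a::field) = s^3-s-1"
  by (simp add: g1_def eval_nat_numeral; algebra)
lemma ev_g2: "poly g2 (s::'a::field) = - (s^3)-2*s^2-3*s-1"
  by (simp add: g2_def eval_nat_numeral; algebra)

lemma vv_dd: "poly vv (s::'a::field) = (poly dd s)^2"
  by (simp add: ev_vv ev_dd power_mult_distrib)

lemma sg_uu: "s \<noteq> 0 \<Longrightarrow> poly uu (sg (s::'a::field)) = poly uu s / s^6"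
  by (simp add: ev_uu sg_def field_simps) (simp add: algebra_simps eval_nat_numeral)
lemma sg_vv: "s \<noteq> 0 \<Longrightarrow> poly vv (sg (s::'a::field)) = poly vv s / s^6"
  by (simp add: ev_vv sg_def field_simps) (simp add: algebra_simps eval_nat_numeral)
lemma sg_dd: "s \<noteq> 0 \<Longrightarrow> poly dd (sg (s::'a::field)) = poly dd s / s^3"
  by (simp add: ev_dd sg_def field_simps) (simp add: algebra_simps eval_nat_numeral)
lemma sg_g0: "s \<noteq> 0 \<Longrightarrow> poly g0 (sg (s::'a::field)) = poly g1 s / s^3"
  by (simp add: ev_g0 ev_g1 sg_def field_simps) (simp add: algebra_simps eval_nat_numeral)
lemma sg_g1: "s \<noteq> 0 \<Longrightarrow> poly g1 (sg (s::'a::field)) = poly g2 s / s^3"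
  by (simp add: ev_g1 ev_g2 sg_def field_simps) (simp add: algebra_simps eval_nat_numeral)


lemma poly_hom_sum: "poly (hom r m) s = (\<Sum>k\<le>m. coeff r k * poly uu s ^ k * poly vv s ^ (m-k))"
  by (simp add: hom_def poly_sum mult.assoc)

lemma poly_hom:
  fixes s :: "'a::field"
  assumes v0: "poly vv s \<noteq> 0" and dr: "degree r \<le> m"
  shows "poly (hom r m) s = poly vv s ^ m * poly r (poly uu s / poly vv s)"
proof -
  have "poly r (poly uu s / poly vv s) = (\<Sum>k\<le>degree r. coeff r k * (poly uu s / poly vv s) ^ k)"
    by (simp add: poly_altdef)
  also have "\<dots> = (\<Sum>k\<le>m. coeff r k * (poly uu s / poly vv s) ^ k)"
    using dr by (intro sum.mono_neutral_left) (auto simp: coeff_eq_0)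
  finally have e: "poly r (poly uu s / poly vv s) = \<dots>" .
  have "poly vv s ^ m * poly r (poly uu s / poly vv s) =
        (\<Sum>k\<le>m. coeff r k * poly uu s ^ k * poly vv s ^ (m-k))"
    unfolding e sum_distrib_left
  proof (intro sum.cong refl)
    fix k assume "k \<in> {..m}"
    hence km: "m = k + (m - k)" by simp
    have "poly vv s ^ m = poly vv s ^ k * poly vv s ^ (m-k)"
      by (subst km) (simp add: power_add)
    thus "poly vv s ^ m * (coeff r k * (poly uu s / poly vv s) ^ k) =
          coeff r k * poly uu s ^ k * poly vv s ^ (m - k)"
      using v0 by (simp add: power_divide field_simps)
  qed
  thus ?thesis by (simp add: poly_hom_sum)
qed

lemma hom_sg:
  fixes s :: "'a::field"
  assumes s0: "s \<noteq> 0"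
  shows "poly (hom r m) (sg s) = poly (hom r m) s / s^(6*m)"
proof -
  have "poly (hom r m) (sg s) = (\<Sum>k\<le>m. coeff r k * (poly uu s / s^6) ^ k * (poly vv s / s^6) ^ (m-k))"
    using s0 by (simp add: poly_hom_sum sg_uu sg_vv)
  also have "\<dots> = (\<Sum>k\<le>m. (coeff r k * poly uu s ^ k * poly vv s ^ (m-k)) / s^(6*m))"
  proof (intro sum.cong refl)
    fix k assume "k \<in> {..m}"
    hence km: "6*m = 6*k + 6*(m - k)" by simp
    show "coeff r k * (poly uu s / s ^ 6) ^ k * (poly vv s / s ^ 6) ^ (m - k) =
         coeff r k * poly uu s ^ k * poly vv s ^ (m - k) / s ^ (6 * m)"
      using s0 by (subst km) (simp add: power_divide power_add field_simps, simp add: power_mult[symmetric] mult.commute)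
  qed
  also have "\<dots> = poly (hom r m) s / s^(6*m)"
    by (simp add: poly_hom_sum sum_divide_distrib)
  finally show ?thesis .
qed

lemma hom_at0:
  fixes r :: "'a::field poly"
  shows "poly (hom r m) 0 = coeff r m * (-1)^m"
proof -
  have "poly (hom r m) 0 = (\<Sum>k\<le>m. if k = m then coeff r m * (-1)^m else 0)"
    unfolding poly_hom_sum by (intro sum.cong refl) (auto simp: ev_uu ev_vv)
  thus ?thesis by simp
qed

lemma hom_atm1:
  fixes r :: "'a::field poly"
  shows "poly (hom r m) (-1) = coeff r m * (-1)^m"
proof -
  have "poly (hom r m) (-1) = (\<Sum>k\<le>m. if k = m then coeff r m * (-1)^m else 0)"
    unfolding poly_hom_sum by (intro sum.cong refl) (auto simp: ev_uu ev_vv)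
  thus ?thesis by simp
qed

lemma hom_Suc_low:
  assumes "coeff r (Suc n) = 0"
  shows "hom r (Suc n) = vv * hom r n"
proof -
  have "hom r (Suc n) = (\<Sum>k\<le>n. smult (coeff r k) (uu^k * vv^(Suc n-k)))"
    unfolding hom_def using assms by (simp add: atMost_Suc)
  also have "\<dots> = (\<Sum>k\<le>n. vv * smult (coeff r k) (uu^k * vv^(n-k)))"
    by (intro sum.cong refl) (simp add: Suc_diff_le mult_ac)
  also have "\<dots> = vv * hom r n" by (simp add: hom_def sum_distrib_left)
  finally show ?thesis .
qed

lemma degree_uu: "degree (uu::'a::field_char_0 poly) = 6" by (simp add: uu_def)
lemma degree_vv: "degree (vv::'a::field_char_0 poly) = 4" by (simp add: vv_def)
lemma lc_uu: "lead_coeff (uu::'a::field_char_0 poly) = -1" by (simp add: uu_def)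
lemma lc_vv: "lead_coeff (vv::'a::field_char_0 poly) = 4" by (simp add: vv_def)
lemma uu_nz: "(uu::'a::field_char_0 poly) \<noteq> 0" by (simp add: uu_def)
lemma vv_nz: "(vv::'a::field_char_0 poly) \<noteq> 0" by (simp add: vv_def)

lemma degree_term: "degree ((uu::'a::field_char_0 poly)^k * vv^j) = 6*k + 4*j"
  by (simp add: degree_mult_eq degree_power_eq degree_uu degree_vv uu_nz vv_nz)

lemma lc_term: "lead_coeff ((uu::'a::field_char_0 poly)^k * vv^j) = (-1)^k * 4^j"
  by (simp add: lead_coeff_mult lead_coeff_power lc_uu lc_vv)

lemma degree_hom:
  fixes r :: "'a::field_char_0 poly"
  assumes r0: "r \<noteq> 0" and dr: "degree r \<le> m"
  shows "degree (hom r m) = 4*m + 2*degree r"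
proof -
  define d where "d = degree r"
  have le: "degree (hom r m) \<le> 4*m + 2*d"
    unfolding hom_def
  proof (intro degree_sum_le)
    fix k assume k: "k \<in> {..m}"
    show "degree (smult (coeff r k) (uu ^ k * vv ^ (m - k))) \<le> 4 * m + 2 * d"
    proof (cases "coeff r k = 0")
      case True thus ?thesis by simp
    next
      case False
      hence "k \<le> d" unfolding d_def by (rule le_degree)
      moreover have "6*k+4*(m-k) = 4*m+2*k" using k by auto
      ultimately show ?thesis using k by (simp add: degree_term)
    qed
  qed simp
  have "coeff (hom r m) (4*m + 2*d) = (\<Sum>k\<le>m. if k = d then coeff r d * ((-1)^d * 4^(m-d)) else 0)"
    unfolding hom_def coeff_sum
  proof (intro sum.cong refl)
    fix k assume k: "k \<in> {..m}"
    show "coeff (smult (coeff r k) (uu ^ k * vv ^ (m - k))) (4 * m + 2 * d) =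
          (if k = d then coeff r d * ((-1) ^ d * 4 ^ (m - d)) else 0)"
    proof (cases "k = d")
      case True
      have "6*d+4*(m-d) = 4*m+2*d" using dr unfolding d_def[symmetric] by auto
      hence "degree ((uu::'a poly) ^ d * vv ^ (m - d)) = 4 * m + 2 * d"
        by (simp add: degree_term)
      thus ?thesis using True lc_term[of d "m-d", where 'a='a] by (simp del: lc_term)
    next
      case False
      show ?thesis
      proof (cases "k < d")
        case True
        have "6*k+4*(m-k) = 4*m+2*k" using k by auto
        hence "degree ((uu::'a poly) ^ k * vv ^ (m - k)) < 4 * m + 2 * d"
          using True k by (simp add: degree_term)
        thus ?thesis using False by (simp add: coeff_eq_0)
      next
        case False2: False
        hence "coeff r k = 0" using False unfolding d_def by (intro coeff_eq_0) simp
        thus ?thesis using False by simp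
      qed
    qed
  qed
  also have "\<dots> = coeff r d * ((-1)^d * 4^(m-d))"
    using dr unfolding d_def by simp
  also have "\<dots> \<noteq> 0" using r0 unfolding d_def by simp
  finally have "degree (hom r m) \<ge> 4*m + 2*d" by (rule le_degree)
  with le show ?thesis unfolding d_def by simp
qed


lemma smult_eq_mult: "smult a p = [:a:] * p" by simp

lemma pderiv_sum_gen: "pderiv (\<Sum>k\<in>A. f k) = (\<Sum>k\<in>A. pderiv (f k))"
  by (induction A rule: infinite_finite_induct) (auto simp: pderiv_add)

definition "Wuv = pderiv uu * vv - uu * pderiv vv"
lemma poly_Wuv: "poly Wuv (x::'a::field_char_0) = poly (pderiv uu) x * poly vv x - poly uu x * poly (pderiv vv) x"
  by (simp add: Wuv_def)

definition "Tq r m = (\<Sum>k\<le>m. smult (coeff r k * of_nat k) (uu^(k-1) * vv^(m-k)))"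

lemma vv_pderiv_pow: "vv * pderiv (vv^j) = smult (of_nat j) (vv^j * pderiv vv)"
proof (cases j)
  case 0 thus ?thesis by simp
next
  case (Suc i)
  show ?thesis unfolding Suc pderiv_power_Suc by (simp add: algebra_simps)
qed

lemma smult_sum_right: "smult c (sum f A) = (\<Sum>x\<in>A. smult c (f x))"
  by (induction A rule: infinite_finite_induct) (auto simp: smult_add_right)

lemma pderiv_term:
  assumes "k \<le> m"
  shows "vv * pderiv ((uu::'a::field_char_0 poly)^k * vv^(m-k)) =
         smult (of_nat m) (pderiv vv * (uu^k * vv^(m-k))) + Wuv * smult (of_nat k) (uu^(k-1) * vv^(m-k))"
proof (cases k)
  case 0
  thus ?thesis using vv_pderiv_pow[of m] by (simp add: algebra_simps)
next
  case (Suc i)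
  define j where "j = m - k"
  have mij: "m = Suc i + j" using assms Suc j_def by simp
  have "vv * pderiv (uu^k * vv^(m-k)) = uu^(Suc i) * (vv * pderiv (vv^j)) + vv^j * vv * pderiv (uu^(Suc i))"
    by (simp add: Suc j_def pderiv_mult algebra_simps)
  also have "\<dots> = uu^(Suc i) * smult (of_nat j) (vv^j * pderiv vv) + vv^j * vv * (smult (of_nat (Suc i)) (uu ^ i) * pderiv uu)"
    by (simp only: vv_pderiv_pow pderiv_power_Suc)
  also have "\<dots> = smult (of_nat m) (pderiv vv * ((uu::'a poly)^k * vv^(m-k))) + Wuv * smult (of_nat k) (uu^(k-1) * vv^(m-k))"
    (is "?L = ?R")
  proof -
    have "poly ?L = poly ?R"
      unfolding mij Suc j_def[symmetric] by (rule ext) (simp add: poly_Wuv algebra_simps)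
    thus ?thesis by (simp only: poly_eq_poly_eq_iff)
  qed
  finally show ?thesis .
qed

lemma pderiv_hom:
  "vv * pderiv (hom (r::'a::field_char_0 poly) m) = smult (of_nat m) (pderiv vv * hom r m) + Wuv * Tq r m"
proof -
  have "vv * pderiv (hom r m) = (\<Sum>k\<le>m. smult (coeff r k) (vv * pderiv (uu^k * vv^(m-k))))"
    by (simp add: hom_def pderiv_sum_gen pderiv_smult sum_distrib_left)
  also have "\<dots> = (\<Sum>k\<le>m. smult (coeff r k) (smult (of_nat m) (pderiv vv * (uu^k * vv^(m-k))) + Wuv * smult (of_nat k) (uu^(k-1) * vv^(m-k))))"
    by (intro sum.cong refl) (simp add: pderiv_term)
  also have "\<dots> = smult (of_nat m) (pderiv vv * hom r m) + Wuv * Tq r m"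
    by (simp add: hom_def Tq_def smult_add_right sum.distrib sum_distrib_left mult_smult_right smult_sum_right smult_smult mult.commute)
  finally show ?thesis .
qed


lemma vv_dd_poly: "vv = dd * (dd::'a::field_char_0 poly)"
  by (simp add: vv_def dd_def)

lemma ev_duu: "poly (pderiv uu) (s::'a::field_char_0) = - (6*s^5+10*s^4+16*s^3+24*s^2+18*s+4)"
  by (simp add: uu_def pderiv_pCons eval_nat_numeral; algebra)
lemma ev_dvv: "poly (pderiv vv) (s::'a::field_char_0) = 16*s^3+24*s^2+8*s"
  by (simp add: vv_def pderiv_pCons eval_nat_numeral; algebra)
lemma ev_ddd: "poly (pderiv dd) (s::'a::field_char_0) = 4*s+2"
  by (simp add: dd_def pderiv_pCons eval_nat_numeral; algebra)
lemma ev_dg0: "poly (pderiv g0) (s::'a::field_char_0) = 3*s^2+4*s+1"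
  by (simp add: g0_def pderiv_pCons eval_nat_numeral; algebra)
lemma ev_dg1: "poly (pderiv g1) (s::'a::field_char_0) = 3*s^2-1"
  by (simp add: g1_def pderiv_pCons eval_nat_numeral; algebra)
lemma ev_dg2: "poly (pderiv g2) (s::'a::field_char_0) = -3*s^2-4*s-3"
  by (simp add: g2_def pderiv_pCons eval_nat_numeral; algebra)

lemma Wuv_omega: "w^2+w+1 = 0 \<Longrightarrow> poly Wuv (w::'a::field_char_0) = 0"
proof -
  assume h: "w^2+w+1 = 0"
  have "poly Wuv w = (w^2+w+1) * (8*w+32*w^2+40*w^3+16*w^4-16*w^5-24*w^6-8*w^7)"
    by (simp add: poly_Wuv ev_duu ev_dvv ev_uu ev_vv; algebra)
  thus ?thesis using h by simp
qed

lemma dyn1: "(poly g0 s)^2 + poly uu s = poly dd s * poly g1 (s::'a::field_char_0)"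
  by (simp add: ev_g0 ev_g1 ev_uu ev_dd; algebra)
lemma dyn2: "(poly g1 s)^2 + poly uu s = poly dd s * poly g2 (s::'a::field_char_0)"
  by (simp add: ev_g2 ev_g1 ev_uu ev_dd; algebra)
lemma dyn3: "(poly g2 s)^2 + poly uu s = poly dd s * poly g0 (s::'a::field_char_0)"
  by (simp add: ev_g2 ev_g0 ev_uu ev_dd; algebra)

lemma fix_g0: "poly g0 s = 0 \<Longrightarrow> poly uu s = s * poly vv (s::'a::field_char_0)"
proof -
  assume h: "poly g0 s = 0"
  have "poly uu s - s * poly vv s = poly g0 s * (-1 - 3*s - 4*s^2 - s^3)"
    by (simp add: ev_g0 ev_uu ev_vv; algebra)
  thus ?thesis using h by simp
qed

lemma wder0: "w^2+w+1 = 0 \<Longrightarrow> poly (pderiv g0) w * poly dd w - poly g0 w * poly (pderiv dd) (w::'a::field_char_0) \<noteq> 0"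
proof -
  assume h: "w^2+w+1 = 0"
  have "poly (pderiv g0) w * poly dd w - poly g0 w * poly (pderiv dd) w = (w^2+w+1)*(2*w^2+2*w-2) - 4*w"
    by (simp add: ev_dg0 ev_dd ev_g0 ev_ddd; algebra)
  moreover have "w \<noteq> 0" using h by auto
  ultimately show ?thesis using h by simp
qed
lemma wder1: "w^2+w+1 = 0 \<Longrightarrow> poly (pderiv g1) w * poly dd w - poly g1 w * poly (pderiv dd) (w::'a::field_char_0) \<noteq> 0"
proof -
  assume h: "w^2+w+1 = 0"
  have "poly (pderiv g1) w * poly dd w - poly g1 w * poly (pderiv dd) w = (w^2+w+1)*(2*w^2+2*w-2) + 4*(w+1)"
    by (simp add: ev_dg1 ev_dd ev_g1 ev_ddd; algebra)
  moreover have w1: "w + 1 \<noteq> 0"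
  proof
    assume "w + 1 = 0" hence "w = -1" by (simp add: add_eq_0_iff2)
    thus False using h by simp
  qed
  moreover have "(4::'a)*w+4 \<noteq> 0"
  proof
    assume "(4::'a)*w+4 = 0" hence "4*(w+1) = 0" by (simp add: algebra_simps)
    thus False using w1 by (metis mult_eq_0_iff zero_neq_numeral)
  qed
  ultimately show ?thesis using h by simp
qed
lemma wder2: "w^2+w+1 = 0 \<Longrightarrow> poly (pderiv g2) w * poly dd w - poly g2 w * poly (pderiv dd) (w::'a::field_char_0) \<noteq> 0"
proof -
  assume h: "w^2+w+1 = 0"
  have "poly (pderiv g2) w * poly dd w - poly g2 w * poly (pderiv dd) w = (w^2+w+1)*(6-2*w-2*w^2) - 4"
    by (simp add: ev_dg2 ev_dd ev_g2 ev_ddd; algebra)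
  thus ?thesis using h by simp
qed

lemma dd_omega: "w^2+w+1 = 0 \<Longrightarrow> poly dd (w::'a::field_char_0) = -2"
proof -
  assume h: "w^2+w+1 = 0"
  have "poly dd w = 2*(w^2+w+1) - 2" by (simp add: ev_dd; algebra)
  thus ?thesis using h by simp
qed

lemma sg_omega: "w^2+w+1 = 0 \<Longrightarrow> sg (w::'a::field_char_0) = w"
proof -
  assume h: "w^2+w+1 = 0"
  hence w0: "w \<noteq> 0" by auto
  have "-(w+1) = w*w" using h by (simp add: power2_eq_square algebra_simps add_eq_0_iff2) (metis add.commute add_eq_0_iff2 add.left_commute)
  thus ?thesis using w0 unfolding sg_def by (simp add: field_simps)
qed

lemma sg_Omega_iff: "s \<noteq> 0 \<Longrightarrow> (sg s)^2 + sg s + 1 = 0 \<longleftrightarrow> s^2+s+1 = (0::'a::field_char_0)"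
proof -
  assume s0: "s \<noteq> 0"
  have "(sg s)^2 + sg s + 1 = (s^2+s+1) / s^2"
    using s0 unfolding sg_def by (simp add: field_simps; algebra)
  thus ?thesis using s0 by simp
qed




lemma poly_pderiv_hom:
  fixes r :: "'a::field_char_0 poly"
  assumes w: "w^2+w+1 = 0"
  shows "poly vv w * poly (pderiv (hom r m)) w = of_nat m * poly (pderiv vv) w * poly (hom r m) w"
proof -
  have "poly (vv * pderiv (hom r m)) w = poly (smult (of_nat m) (pderiv vv * hom r m) + Wuv * Tq r m) w"
    by (simp only: pderiv_hom)
  thus ?thesis using Wuv_omega[OF w] by (simp add: mult.assoc)
qed

lemma vv_omega: "w^2+w+1 = 0 \<Longrightarrow> poly vv (w::'a::field_char_0) = 4"
  using dd_omega[of w] by (simp add: vv_dd)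

lemma deriv_nonzero:
  fixes p q g :: "'a::field_char_0 poly"
  assumes w: "w^2+w+1 = 0" and dp: "degree p \<le> m" and dq: "degree q \<le> m"
    and ncr: "\<And>x. \<not> (poly p x = 0 \<and> poly q x = 0)"
    and gw: "poly (pderiv g) w * poly dd w - poly g w * poly (pderiv dd) w \<noteq> 0"
    and E0: "poly (g * hom q m - dd * hom p m) w = 0"
  shows "poly (pderiv (g * hom q m - dd * hom p m)) w \<noteq> 0"
proof
  define Q where "Q = hom q m"
  define P where "P = hom p m"
  assume D0: "poly (pderiv (g * hom q m - dd * hom p m)) w = 0"
  have v4: "poly vv w = 4" using vv_omega[OF w] .
  have d2: "poly dd w = -2" using dd_omega[OF w] .
  have vQ: "poly vv w * poly (pderiv Q) w = of_nat m * poly (pderiv vv) w * poly Q w"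
    unfolding Q_def using poly_pderiv_hom[OF w] .
  have vP: "poly vv w * poly (pderiv P) w = of_nat m * poly (pderiv vv) w * poly P w"
    unfolding P_def using poly_pderiv_hom[OF w] .
  have E0': "poly g w * poly Q w = poly dd w * poly P w" using E0 unfolding Q_def P_def by simp
  have D0': "poly (pderiv g) w * poly Q w + poly g w * poly (pderiv Q) w
             - (poly (pderiv dd) w * poly P w + poly dd w * poly (pderiv P) w) = 0"
    using D0 unfolding Q_def[symmetric] P_def[symmetric] by (simp add: pderiv_diff pderiv_mult algebra_simps)
  hence z: "poly vv w * (poly (pderiv g) w * poly Q w + poly g w * poly (pderiv Q) w
             - (poly (pderiv dd) w * poly P w + poly dd w * poly (pderiv P) w)) = 0" by simp
  have "poly vv w * (poly (pderiv g) w * poly Q w + poly g w * poly (pderiv Q) w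
             - (poly (pderiv dd) w * poly P w + poly dd w * poly (pderiv P) w)) =
        poly vv w * (poly (pderiv g) w * poly Q w - poly (pderiv dd) w * poly P w)
        + poly g w * (poly vv w * poly (pderiv Q) w) - poly dd w * (poly vv w * poly (pderiv P) w)"
    by (simp add: algebra_simps)
  also have "\<dots> = poly vv w * (poly (pderiv g) w * poly Q w - poly (pderiv dd) w * poly P w)
         + of_nat m * poly (pderiv vv) w * (poly g w * poly Q w - poly dd w * poly P w)"
    unfolding vQ vP by (simp add: algebra_simps)
  finally have "poly vv w * (poly (pderiv g) w * poly Q w - poly (pderiv dd) w * poly P w)
         + of_nat m * poly (pderiv vv) w * (poly g w * poly Q w - poly dd w * poly P w) = 0"
    using z by simp
  hence "poly vv w * (poly (pderiv g) w * poly Q w - poly (pderiv dd) w * poly P w) = 0"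
    using E0' by simp
  hence e1: "poly (pderiv g) w * poly Q w - poly (pderiv dd) w * poly P w = 0" using v4 by simp
  have "poly Q w * (poly (pderiv g) w * poly dd w - poly g w * poly (pderiv dd) w)
        = poly dd w * (poly (pderiv g) w * poly Q w - poly (pderiv dd) w * poly P w)"
    using E0' by (simp add: algebra_simps)
  hence "poly Q w = 0" using e1 gw by simp
  hence "poly P w = 0" using E0' d2 by simp
  define c where "c = poly uu w / poly vv w"
  have "poly Q w = 4^m * poly q c" unfolding Q_def c_def using poly_hom[of w q m] v4 dq by simp
  hence qc: "poly q c = 0" using \<open>poly Q w = 0\<close> by simp
  have "poly P w = 4^m * poly p c" unfolding P_def c_def using poly_hom[of w p m] v4 dp by simp
  hence "poly p c = 0" using \<open>poly P w = 0\<close> by simp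
  thus False using qc ncr by blast
qed


lemma EE_sg1:
  fixes p q :: "'a::field_char_0 poly"
  assumes s0: "s \<noteq> 0"
  shows "poly (g1 * hom q m - dd * hom p m) s = s^(6*m+3) * poly (g0 * hom q m - dd * hom p m) (sg s)"
  using s0 by (simp add: hom_sg sg_g0 sg_dd field_simps power_add)

lemma EE_sg2:
  fixes p q :: "'a::field_char_0 poly"
  assumes s0: "s \<noteq> 0"
  shows "poly (g2 * hom q m - dd * hom p m) s = s^(6*m+3) * poly (g1 * hom q m - dd * hom p m) (sg s)"
  using s0 by (simp add: hom_sg sg_g1 sg_dd field_simps power_add)

definition "good3 c y \<longleftrightarrow> y \<noteq> 0 \<and> y^2 + c \<noteq> y \<and> (y^2+c)^2+c \<noteq> y \<and> ((y^2+c)^2+c)^2+c = y"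

lemma good_root:
  fixes p q :: "'a::field_char_0 poly"
  assumes dp: "degree p \<le> m" and dq: "degree q \<le> m"
    and ncr: "\<And>x. \<not> (poly p x = 0 \<and> poly q x = 0)"
    and E: "poly (g0 * hom q m - dd * hom p m) s = 0"
    and s0: "s \<noteq> 0" and s1: "s \<noteq> -1" and sw: "s^2+s+1 \<noteq> 0" and sg0: "poly g0 s \<noteq> 0"
  shows "\<exists>c. poly q c \<noteq> 0 \<and> good3 c (poly p c / poly q c)"
proof -
  have s1': "s + 1 \<noteq> 0" using s1 by (simp add: add_eq_0_iff2)
  have d0: "poly dd s \<noteq> 0" using s0 s1' by (simp add: ev_dd)
  have v0: "poly vv s \<noteq> 0" using d0 by (simp add: vv_dd)
  define c where "c = poly uu s / poly vv s"
  have Qs: "poly (hom q m) s = poly vv s ^ m * poly q c" unfolding c_def using poly_hom[OF v0 dq] .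
  have Ps: "poly (hom p m) s = poly vv s ^ m * poly p c" unfolding c_def using poly_hom[OF v0 dp] .
  have E': "poly g0 s * poly (hom q m) s = poly dd s * poly (hom p m) s" using E by simp
  have qc: "poly q c \<noteq> 0"
  proof
    assume "poly q c = 0"
    hence "poly dd s * poly (hom p m) s = 0" using E' Qs by simp
    hence "poly p c = 0" using d0 v0 Ps by simp
    thus False using ncr \<open>poly q c = 0\<close> by blast
  qed
  define y where "y = poly p c / poly q c"
  have y: "y = poly g0 s / poly dd s"
  proof -
    have "poly g0 s * (poly vv s ^ m * poly q c) = poly dd s * (poly vv s ^ m * poly p c)"
      using E' Qs Ps by simp
    hence "poly g0 s * poly q c = poly dd s * poly p c" using v0 by simp
    thus ?thesis unfolding y_def using qc d0 by (simp add: field_simps)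
  qed
  have cval: "c = poly uu s / (poly dd s)^2" unfolding c_def by (simp add: vv_dd)
  have y1: "y^2 + c = poly g1 s / poly dd s"
    unfolding y cval using d0 dyn1[of s] by (simp add: field_simps power2_eq_square)
  have y2': "(poly g1 s / poly dd s)^2 + c = poly g2 s / poly dd s"
    unfolding cval using d0 dyn2[of s] by (simp add: field_simps power2_eq_square)
  have y2: "(y^2 + c)^2 + c = poly g2 s / poly dd s"
    using y1 y2' by simp
  have y3': "(poly g2 s / poly dd s)^2 + c = poly g0 s / poly dd s"
    unfolding cval using d0 dyn3[of s] by (simp add: field_simps power2_eq_square)
  have y3: "((y^2 + c)^2 + c)^2 + c = poly g0 s / poly dd s"
    using y2 y3' by simp
  have n1: "poly g1 s \<noteq> poly g0 s"
  proof
    assume "poly g1 s = poly g0 s"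
    hence "2 * (s^2+s+1) = 0" by (simp add: ev_g0 ev_g1; algebra)
    thus False using sw by (metis mult_eq_0_iff zero_neq_numeral)
  qed
  have n2: "poly g2 s \<noteq> poly g0 s"
  proof
    assume "poly g2 s = poly g0 s"
    hence "2 * (s + 1) * (s^2+s+1) = 0" by (simp add: ev_g0 ev_g2; algebra)
    thus False using sw s1' by (metis mult_eq_0_iff zero_neq_numeral)
  qed
  have "good3 c y"
    unfolding good3_def using y y1 y2 y3 n1 n2 sg0 d0 by (auto simp: divide_cancel_right)
  thus ?thesis using qc unfolding y_def by blast
qed




lemma degree_diff_eq_l: "degree q < degree p \<Longrightarrow> degree (p - q) = degree (p::'a::ab_group_add poly)"
  using degree_add_eq_left[of "-q" p] by (simp add: degree_minus)

lemma degree_diff_eq_r: "degree p < degree q \<Longrightarrow> degree (p - q) = degree (q::'a::ab_group_add poly)"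
  using degree_add_eq_right[of p "-q"] by (simp add: degree_minus)

lemma prod_linear_dvd:
  fixes P :: "'a::idom poly"
  shows "finite S \<Longrightarrow> (\<forall>w\<in>S. poly P w = 0) \<Longrightarrow> (\<Prod>w\<in>S. [:-w,1:]) dvd P"
proof (induction S arbitrary: P rule: finite_induct)
  case empty thus ?case by simp
next
  case (insert x S)
  have "poly P x = 0" using insert.prems by simp
  then obtain P' where P: "P = [:-x,1:] * P'" by (metis dvdE poly_eq_0_iff_dvd)
  have "\<forall>w\<in>S. poly P' w = 0"
  proof
    fix w assume "w \<in> S"
    hence "w \<noteq> x" "poly P w = 0" using insert by auto
    thus "poly P' w = 0" using P by simp
  qed
  hence d: "(\<Prod>w\<in>S. [:-w,1:]) dvd P'" by (rule insert.IH)
  have eq: "(\<Prod>w\<in>insert x S. [:-w,1:]) = [:-x,1:] * (\<Prod>w\<in>S. [:-w,1:])"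
    by (rule prod.insert[OF insert.hyps])
  show ?case unfolding eq P by (rule mult_dvd_mono[OF dvd_refl d])
qed

lemma degree_prod_linear:
  "finite S \<Longrightarrow> degree (\<Prod>w\<in>S. [:-w,(1::'a::idom):]) = card S"
proof (induction S rule: finite_induct)
  case empty thus ?case by simp
next
  case (insert x S)
  have nz: "(\<Prod>w\<in>S. [:-w,(1::'a):]) \<noteq> 0" by (simp add: prod_zero_iff insert.hyps)
  have eq: "(\<Prod>w\<in>insert x S. [:-w,(1::'a):]) = [:-x,1:] * (\<Prod>w\<in>S. [:-w,1:])"
    by (rule prod.insert[OF insert.hyps])
  have "degree ([:-x,(1::'a):] * (\<Prod>w\<in>S. [:-w,1:])) = degree [:-x,(1::'a):] + degree (\<Prod>w\<in>S. [:-w,(1::'a):])"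
    by (rule degree_mult_eq) (simp_all add: nz)
  thus ?case unfolding eq using insert by simp
qed

lemma prod_linear_root: "finite S \<Longrightarrow> w \<in> S \<Longrightarrow> poly (\<Prod>w\<in>S. [:-w,(1::'a::idom):]) w = 0"
  by (simp add: poly_prod prod_zero_iff)

lemma order_one:
  fixes p :: "'a::{idom,semiring_char_0} poly"
  assumes "p \<noteq> 0" "poly p w = 0" "poly (pderiv p) w \<noteq> 0"
  shows "order w p = 1"
  using order_pderiv[OF assms(1,2)] order_0I[OF assms(3)] by simp

lemma sum_id:
  fixes P Q :: "'a::field_char_0 poly"
  shows "[:0,1:] * (g0 * Q - dd * P) - [:1,1:] * (g1 * Q - dd * P) + (g2 * Q - dd * P) = 0"
proof -
  have "poly ([:0,1:] * (g0 * Q - dd * P) - [:1,1:] * (g1 * Q - dd * P) + (g2 * Q - dd * P)) = poly 0"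
    by (rule ext) (simp add: ev_g0 ev_g1 ev_g2 ev_dd; algebra)
  thus ?thesis by (simp only: poly_eq_poly_eq_iff)
qed


lemma degree_g0: "degree (g0::'a::field_char_0 poly) = 3" by (simp add: g0_def)
lemma g0_nz: "(g0::'a::field_char_0 poly) \<noteq> 0" by (simp add: g0_def)

lemma sg_zero: "x \<noteq> 0 \<Longrightarrow> sg x = 0 \<Longrightarrow> x = (-1::'a::field)"
  unfolding sg_def by (simp add: add_eq_0_iff2, metis minus_minus)

lemma sg_m1: "x \<noteq> 0 \<Longrightarrow> sg x \<noteq> (-1::'a::field)"
  unfolding sg_def by (simp add: field_simps)

lemma sg_inj: "x \<noteq> 0 \<Longrightarrow> y \<noteq> 0 \<Longrightarrow> sg x = sg y \<Longrightarrow> x = (y::'a::field)"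
  unfolding sg_def by (simp add: field_simps; simp add: algebra_simps)

lemma order_H:
  fixes E F G H D g :: "'a::field_char_0 poly"
  assumes w: "w^2+w+1 = 0" and dp: "degree p \<le> m" and dq: "degree q \<le> m"
    and ncr: "\<And>x. \<not> (poly p x = 0 \<and> poly q x = 0)"
    and Edef: "E = g * hom q m - dd * hom p m" and ED: "E = D * F" and FG: "F = G * H"
    and gw: "poly (pderiv g) w * poly dd w - poly g w * poly (pderiv dd) w \<noteq> 0"
    and Dw: "poly D w \<noteq> 0" and F0: "F \<noteq> 0" and D0: "D \<noteq> 0"
    and Gw: "poly E w = 0 \<Longrightarrow> poly G w = 0"
  shows "poly H w \<noteq> 0"
proof (cases "poly E w = 0")
  case False
  thus ?thesis using ED FG by auto
next
  case True
  have E0: "E \<noteq> 0" using ED D0 F0 by simp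
  have "poly (pderiv E) w \<noteq> 0" unfolding Edef
    by (rule deriv_nonzero[OF w dp dq ncr gw]) (use True Edef in simp)
  hence oE: "order w E = 1" using order_one[OF E0 True] by simp
  have G0: "G \<noteq> 0" and H0: "H \<noteq> 0" using F0 FG by auto
  have "order w E = order w D + order w F" using ED D0 F0 by (simp add: order_mult)
  also have "order w D = 0" using Dw by (rule order_0I)
  also have "order w F = order w G + order w H" using FG G0 H0 by (simp add: order_mult)
  finally have "order w G + order w H = 1" using oE by simp
  moreover have "order w G > 0" using Gw[OF True] G0 by (simp add: order_gt_0_iff)
  ultimately have "order w H = 0" by simp
  thus ?thesis using H0 by (simp add: order_root)
qed

lemma core_contra:
  fixes p q :: "'a::{alg_closed_field,field_char_0} poly"
  assumes q0: "q \<noteq> 0" and p0: "p \<noteq> 0" and ncr: "\<And>x. \<not> (poly p x = 0 \<and> poly q x = 0)"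
    and mdef: "m = max (degree p) (degree q)"
    and H: "\<And>s. poly (g0 * hom q m - dd * hom p m) s = 0 \<Longrightarrow> s = 0 \<or> s = -1 \<or> s^2+s+1 = 0 \<or> poly g0 s = 0"
  shows False
proof -
  have dp: "degree p \<le> m" and dq: "degree q \<le> m" using mdef by auto
  define E0 where "E0 = g0 * hom q m - dd * hom p m"
  define E1 where "E1 = g1 * hom q m - dd * hom p m"
  define E2 where "E2 = g2 * hom q m - dd * hom p m"
  define N where "N = 6*m+3"
  have sg1: "poly E1 s = s^N * poly E0 (sg s)" if "s \<noteq> 0" for s
    unfolding E0_def E1_def N_def by (rule EE_sg1[OF that])
  have sg2: "poly E2 s = s^N * poly E1 (sg s)" if "s \<noteq> 0" for s
    unfolding E2_def E1_def N_def by (rule EE_sg2[OF that])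
  have H': "poly E0 s = 0 \<Longrightarrow> s = 0 \<or> s = -1 \<or> s^2+s+1 = 0 \<or> poly g0 s = 0" for s
    using H unfolding E0_def by blast
  have R1: "x = 0 \<or> x = -1 \<or> x^2+x+1 = 0 \<or> poly g1 x = 0" if e: "poly E1 x = 0" for x
  proof (cases "x = 0")
    case True thus ?thesis by simp
  next
    case False
    hence "poly E0 (sg x) = 0" using sg1[OF False] e by simp
    hence "sg x = 0 \<or> sg x = -1 \<or> (sg x)^2 + sg x + 1 = 0 \<or> poly g0 (sg x) = 0" by (rule H')
    thus ?thesis using False sg_zero[OF False] sg_m1[OF False] sg_Omega_iff[OF False] sg_g0[OF False]
      by auto
  qed
  have R2: "x = 0 \<or> x = -1 \<or> x^2+x+1 = 0 \<or> poly g2 x = 0" if e: "poly E2 x = 0" for x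
  proof (cases "x = 0")
    case True thus ?thesis by simp
  next
    case False
    hence "poly E1 (sg x) = 0" using sg2[OF False] e by simp
    hence "sg x = 0 \<or> sg x = -1 \<or> (sg x)^2 + sg x + 1 = 0 \<or> poly g1 (sg x) = 0" by (rule R1)
    thus ?thesis using False sg_zero[OF False] sg_m1[OF False] sg_Omega_iff[OF False] sg_g1[OF False]
      by auto
  qed
  have Om: "(poly E1 w = 0 \<longleftrightarrow> poly E0 w = 0) \<and> (poly E2 w = 0 \<longleftrightarrow> poly E0 w = 0)" if w: "w^2+w+1 = 0" for w
  proof -
    have w0: "w \<noteq> 0" using w by auto
    show ?thesis using sg1[OF w0] sg2[OF w0] sg_omega[OF w] w0 by simp
  qed
  obtain D F0 F1 F2 where ED: "E0 = D * F0" "E1 = D * F1" "E2 = D * F2"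
    and Dw: "\<And>w. w^2+w+1 = 0 \<Longrightarrow> poly D w \<noteq> 0" and D0: "D \<noteq> 0"
    and F0z: "poly F0 0 \<noteq> 0" "poly F0 (-1) \<noteq> 0"
    and F1z: "poly F1 0 \<noteq> 0" "poly F1 (-1) \<noteq> 0"
    and F2z: "poly F2 0 \<noteq> 0" "poly F2 (-1) \<noteq> 0"
    and degF: "degree F0 \<ge> 3*m+3"
  proof (cases "degree q = m")
    case True
    have lq: "coeff q m \<noteq> 0" using True q0 leading_coeff_0_iff by metis
    have Q0: "poly (hom q m) 0 \<noteq> 0" "poly (hom q m) (-1) \<noteq> 0"
      using lq by (simp_all add: hom_at0 hom_atm1)
    have hq0: "hom q m \<noteq> 0" using Q0 by auto
    have "degree (g0 * hom q m) = 6*m+3"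
      using hq0 degree_hom[OF q0 dq] True by (simp add: degree_mult_eq degree_g0 g0_nz)
    moreover have "degree (dd * hom p m) \<le> 6*m+2"
    proof -
      have "degree (dd * hom p m) \<le> degree (dd::'a poly) + degree (hom p m)" by (rule degree_mult_le)
      also have "\<dots> = 2 + (4*m + 2*degree p)" using degree_hom[OF p0 dp] by (simp add: dd_def)
      finally show ?thesis using dp by simp
    qed
    ultimately have "degree E0 = 6*m+3" unfolding E0_def by (subst degree_diff_eq_l) auto
    show thesis
    proof (rule that[of 1 E0 E1 E2])
      show "poly E0 0 \<noteq> 0" "poly E0 (-1) \<noteq> 0" "poly E1 0 \<noteq> 0" "poly E1 (-1) \<noteq> 0"
           "poly E2 0 \<noteq> 0" "poly E2 (-1) \<noteq> 0"
        using Q0 unfolding E0_def E1_def E2_def by (simp_all add: ev_g0 ev_g1 ev_g2 ev_dd)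
    qed (use \<open>degree E0 = 6*m+3\<close> in auto)
  next
    case False
    hence qm: "degree q < m" using dq by simp
    hence pm: "degree p = m" using mdef by auto
    then obtain n where n: "m = Suc n" using qm by (cases m) auto
    have "coeff q (Suc n) = 0" using qm n by (simp add: coeff_eq_0)
    hence Qs: "hom q m = vv * hom q n" unfolding n by (rule hom_Suc_low)
    have dqn: "degree q \<le> n" using qm n by simp
    have lp: "coeff p m \<noteq> 0" using pm p0 by (metis leading_coeff_0_iff)
    define K0 where "K0 = g0 * dd * hom q n - hom p m"
    define K1 where "K1 = g1 * dd * hom q n - hom p m"
    define K2 where "K2 = g2 * dd * hom q n - hom p m"
    have EK: "E0 = dd * K0" "E1 = dd * K1" "E2 = dd * K2"
      unfolding E0_def E1_def E2_def K0_def K1_def K2_def Qs vv_dd_poly by (simp_all add: algebra_simps)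
    have P0: "poly (hom p m) 0 \<noteq> 0" "poly (hom p m) (-1) \<noteq> 0"
      using lp by (simp_all add: hom_at0 hom_atm1)
    have "degree (g0 * dd * hom q n) \<le> 6*m - 1"
    proof -
      have "degree (g0 * dd * hom q n) \<le> degree ((g0::'a poly) * dd) + degree (hom q n)" by (rule degree_mult_le)
      also have "\<dots> \<le> degree (g0::'a poly) + degree (dd::'a poly) + degree (hom q n)" using degree_mult_le[of "g0::'a poly" dd] by simp
      also have "\<dots> = 3 + 2 + (4*n + 2*degree q)" using degree_hom[OF q0 dqn] by (simp add: dd_def g0_def)
      finally show ?thesis using dqn n by simp
    qed
    moreover have "degree (hom p m) = 6*m" using degree_hom[OF p0 dp] pm by simp
    ultimately have dK: "degree K0 = 6*m" unfolding K0_def using n by (subst degree_diff_eq_r) auto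
    show thesis
    proof (rule that[of dd K0 K1 K2])
      show "poly K0 0 \<noteq> 0" "poly K0 (-1) \<noteq> 0" "poly K1 0 \<noteq> 0" "poly K1 (-1) \<noteq> 0"
           "poly K2 0 \<noteq> 0" "poly K2 (-1) \<noteq> 0"
        using P0 unfolding K0_def K1_def K2_def by (simp_all add: ev_dd)
      show "(dd::'a poly) \<noteq> 0" by (simp add: dd_def)
      show "\<And>w. w^2+w+1 = 0 \<Longrightarrow> poly (dd::'a poly) w \<noteq> 0" using dd_omega by fastforce
      show "3*m+3 \<le> degree K0" using dK n by simp
    qed (use EK in auto)
  qed
  have Fnz: "F0 \<noteq> 0" "F1 \<noteq> 0" "F2 \<noteq> 0" using F0z F1z F2z by auto
  define Om0 where "Om0 = {w. w^2+w+1 = 0 \<and> poly E0 w = 0}"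
  have Om0sub: "Om0 \<subseteq> {w. poly [:1,1,1:] w = 0}"
    unfolding Om0_def by (auto simp: algebra_simps power2_eq_square)
  have finO: "finite Om0"
    by (rule finite_subset[OF Om0sub poly_roots_finite]) simp
  have cardO: "card Om0 \<le> 2"
  proof -
    have "card Om0 \<le> card {w. poly [:1,1,(1::'a):] w = 0}"
      by (rule card_mono[OF poly_roots_finite Om0sub]) simp
    also have "\<dots> \<le> degree [:1,1,(1::'a):]" by (rule card_poly_roots_bound) simp
    finally show ?thesis by simp
  qed
  define G where "G = (\<Prod>w\<in>Om0. [:-w,1:])"
  have G0: "G \<noteq> 0" unfolding G_def by (simp add: prod_zero_iff finO)
  have degG: "degree G = card Om0" unfolding G_def by (rule degree_prod_linear[OF finO])
  have GO: "poly G w = 0" if "w \<in> Om0" for w unfolding G_def by (rule prod_linear_root[OF finO that])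
  have FO: "poly F0 w = 0 \<and> poly F1 w = 0 \<and> poly F2 w = 0" if "w \<in> Om0" for w
  proof -
    have w: "w^2+w+1 = 0" "poly E0 w = 0" using that unfolding Om0_def by auto
    hence "poly E1 w = 0" "poly E2 w = 0" using Om[OF w(1)] by auto
    thus ?thesis using w ED Dw[OF w(1)] by simp
  qed
  have "G dvd F0" unfolding G_def by (rule prod_linear_dvd[OF finO]) (use FO in blast)
  then obtain H0 where FH0: "F0 = G * H0" by (elim dvdE)
  have "G dvd F1" unfolding G_def by (rule prod_linear_dvd[OF finO]) (use FO in blast)
  then obtain H1 where FH1: "F1 = G * H1" by (elim dvdE)
  have "G dvd F2" unfolding G_def by (rule prod_linear_dvd[OF finO]) (use FO in blast)
  then obtain H2 where FH2: "F2 = G * H2" by (elim dvdE)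
  have Hnz: "H0 \<noteq> 0" "H1 \<noteq> 0" "H2 \<noteq> 0" using Fnz FH0 FH1 FH2 by auto
  have Gw: "poly G w = 0" if "w^2+w+1 = 0" "poly E0 w = 0" for w
    using GO that unfolding Om0_def by blast
  have HO0: "poly H0 w \<noteq> 0" if w: "w^2+w+1 = 0" for w
    by (rule order_H[OF w dp dq ncr E0_def ED(1) FH0 wder0[OF w] Dw[OF w] Fnz(1) D0])
       (use Gw[OF w] in blast)
  have HO1: "poly H1 w \<noteq> 0" if w: "w^2+w+1 = 0" for w
    by (rule order_H[OF w dp dq ncr E1_def ED(2) FH1 wder1[OF w] Dw[OF w] Fnz(2) D0])
       (use Gw[OF w] Om[OF w] in blast)
  have HO2: "poly H2 w \<noteq> 0" if w: "w^2+w+1 = 0" for w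
    by (rule order_H[OF w dp dq ncr E2_def ED(3) FH2 wder2[OF w] Dw[OF w] Fnz(3) D0])
       (use Gw[OF w] Om[OF w] in blast)
  define A where "A = [:0,1:] * H0"
  define B where "B = - ([:1,1:] * H1)"
  define C where "C = H2"
  have "D * G * (A + B + C) = [:0,1:] * E0 - [:1,1:] * E1 + E2"
    unfolding A_def B_def C_def ED FH0 FH1 FH2 by (simp add: algebra_simps)
  also have "\<dots> = 0" unfolding E0_def E1_def E2_def by (rule sum_id)
  finally have ABC: "A + B + C = 0" using D0 G0 by simp
  define Z0 where "Z0 = {x. poly g0 x = 0 \<and> poly E0 x = 0}"
  define Z1 where "Z1 = {x. poly g1 x = 0 \<and> poly E1 x = 0}"
  define Z2 where "Z2 = {x. poly g2 x = 0 \<and> poly E2 x = 0}"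
  have rootA: "x = 0 \<or> x \<in> Z0" if "poly A x = 0" for x
  proof (cases "x = 0")
    case False
    hence "poly H0 x = 0" using that unfolding A_def by simp
    hence "poly E0 x = 0" using ED FH0 by simp
    hence "x = 0 \<or> x = -1 \<or> x^2+x+1 = 0 \<or> poly g0 x = 0" by (rule H')
    thus ?thesis using False \<open>poly H0 x = 0\<close> HO0[of x] F0z FH0 \<open>poly E0 x = 0\<close> unfolding Z0_def by auto
  qed simp
  have rootB: "x = -1 \<or> x \<in> Z1" if "poly B x = 0" for x
  proof (cases "x = -1")
    case False
    hence "x + 1 \<noteq> 0" by (simp add: add_eq_0_iff2)
    moreover have "poly B x = - ((x + 1) * poly H1 x)" unfolding B_def by (simp add: algebra_simps)
    ultimately have "poly H1 x = 0" using that by simp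
    hence "poly E1 x = 0" using ED FH1 by simp
    hence "x = 0 \<or> x = -1 \<or> x^2+x+1 = 0 \<or> poly g1 x = 0" by (rule R1)
    thus ?thesis using False \<open>poly H1 x = 0\<close> HO1[of x] F1z FH1 \<open>poly E1 x = 0\<close> unfolding Z1_def by auto
  qed simp
  have rootC: "x \<in> Z2" if "poly C x = 0" for x
  proof -
    have "poly H2 x = 0" using that unfolding C_def by simp
    hence "poly E2 x = 0" using ED FH2 by simp
    hence "x = 0 \<or> x = -1 \<or> x^2+x+1 = 0 \<or> poly g2 x = 0" by (rule R2)
    thus ?thesis using \<open>poly H2 x = 0\<close> HO2[of x] F2z FH2 \<open>poly E2 x = 0\<close> unfolding Z2_def by auto
  qed
  have g0g1: "False" if "poly g0 x = 0" "poly g1 x = 0" for x :: 'a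
  proof -
    have "2 * (x^2+x+1) = 0" using that by (simp add: ev_g0 ev_g1; algebra)
    hence w: "x^2+x+1 = 0" by (metis mult_eq_0_iff zero_neq_numeral)
    have "poly g0 x = (x^2+x+1)*(x+1) - x" by (simp add: ev_g0; algebra)
    hence "x = 0" using w that by simp
    thus False using w by simp
  qed
  have ncrAB: "\<not> (poly A x = 0 \<and> poly B x = 0)" for x
  proof
    assume h: "poly A x = 0 \<and> poly B x = 0"
    from rootA h have a: "x = 0 \<or> x \<in> Z0" by blast
    from rootB h have b: "x = -1 \<or> x \<in> Z1" by blast
    show False using a b g0g1[of x] unfolding Z0_def Z1_def by (auto simp: ev_g0 ev_g1)
  qed
  have Z0p: "Z0 \<subseteq> {x. poly p x = 0}"
  proof
    fix x assume "x \<in> Z0"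
    hence g: "poly g0 x = 0" and e: "poly E0 x = 0" unfolding Z0_def by auto
    have x0: "x \<noteq> 0" "x + 1 \<noteq> 0" using g by (auto simp: ev_g0 add_eq_0_iff2)
    hence d0: "poly dd x \<noteq> 0" by (simp add: ev_dd)
    hence v0: "poly vv x \<noteq> 0" by (simp add: vv_dd)
    have "poly dd x * poly (hom p m) x = 0" using e g unfolding E0_def by simp
    hence "poly (hom p m) x = 0" using d0 by simp
    hence "poly p (poly uu x / poly vv x) = 0" using poly_hom[OF v0 dp] v0 by simp
    moreover have "poly uu x / poly vv x = x" using fix_g0[OF g] v0 by simp
    ultimately show "x \<in> {x. poly p x = 0}" by simp
  qed
  have finZ0: "finite Z0" by (rule finite_subset[OF Z0p poly_roots_finite[OF p0]])
  have cZ0: "card Z0 \<le> m"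
  proof -
    have "card Z0 \<le> card {x. poly p x = 0}" by (rule card_mono[OF poly_roots_finite[OF p0] Z0p])
    also have "\<dots> \<le> degree p" by (rule card_poly_roots_bound[OF p0])
    finally show ?thesis using dp by simp
  qed
  have Z1nz: "x \<noteq> 0" if "x \<in> Z1" for x using that unfolding Z1_def by (auto simp: ev_g1)
  have Z2nz: "x \<noteq> 0" if "x \<in> Z2" for x using that unfolding Z2_def by (auto simp: ev_g2)
  have Z1img: "sg ` Z1 \<subseteq> Z0"
  proof
    fix y assume "y \<in> sg ` Z1"
    then obtain x where x: "x \<in> Z1" "y = sg x" by auto
    have x0: "x \<noteq> 0" using Z1nz[OF x(1)] .
    have "poly g0 (sg x) = 0" using x(1) sg_g0[OF x0] unfolding Z1_def by simp
    moreover have "poly E0 (sg x) = 0" using x(1) sg1[OF x0] x0 unfolding Z1_def by simp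
    ultimately show "y \<in> Z0" using x unfolding Z0_def by simp
  qed
  have Z2img: "sg ` Z2 \<subseteq> Z1"
  proof
    fix y assume "y \<in> sg ` Z2"
    then obtain x where x: "x \<in> Z2" "y = sg x" by auto
    have x0: "x \<noteq> 0" using Z2nz[OF x(1)] .
    have "poly g1 (sg x) = 0" using x(1) sg_g1[OF x0] unfolding Z2_def by simp
    moreover have "poly E1 (sg x) = 0" using x(1) sg2[OF x0] x0 unfolding Z2_def by simp
    ultimately show "y \<in> Z1" using x unfolding Z1_def by simp
  qed
  have inj1: "inj_on sg Z1" by (rule inj_onI) (use Z1nz sg_inj in blast)
  have inj2: "inj_on sg Z2" by (rule inj_onI) (use Z2nz sg_inj in blast)
  have g1nz: "g1 \<noteq> (0::'a poly)" by (simp add: g1_def)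
  have g2nz: "g2 \<noteq> (0::'a poly)" by (simp add: g2_def)
  have finZ1: "finite Z1" by (rule finite_subset[OF _ poly_roots_finite[OF g1nz]]) (auto simp: Z1_def)
  have finZ2: "finite Z2" by (rule finite_subset[OF _ poly_roots_finite[OF g2nz]]) (auto simp: Z2_def)
  have cZ1: "card Z1 \<le> m"
    using card_image[OF inj1] card_mono[OF finZ0 Z1img] cZ0 by simp
  have cZ2: "card Z2 \<le> m"
    using card_image[OF inj2] card_mono[OF finZ1 Z2img] cZ1 by simp
  have rootsABC: "{x. poly (A*B*C) x = 0} \<subseteq> {0,-1} \<union> Z0 \<union> Z1 \<union> Z2"
    using rootA rootB rootC by auto
  have "card {x. poly (A*B*C) x = 0} \<le> card ({0,-1} \<union> Z0 \<union> Z1 \<union> Z2)"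
    by (rule card_mono[OF _ rootsABC]) (simp add: finZ0 finZ1 finZ2)
  also have "\<dots> \<le> card ({0,-1::'a}) + card Z0 + card Z1 + card Z2"
    by (meson card_Un_le le_trans add_le_mono order_refl)
  also have "\<dots> \<le> 2 + 3*m" using cZ0 cZ1 cZ2
    by (simp add: card_insert_if)
  finally have cABC: "card {x. poly (A*B*C) x = 0} \<le> 2 + 3*m" .
  have degA: "degree A = 1 + degree H0" unfolding A_def using Hnz by (simp add: degree_mult_eq)
  have "degree A < card {x. poly (A*B*C) x = 0}"
    by (rule mason[OF ABC ncrAB]) (simp add: degA)
  moreover have "degree F0 = degree G + degree H0" using FH0 G0 Hnz by (simp add: degree_mult_eq)
  ultimately show False using cABC degF degG cardO degA by linarith
qed




lemma core_exists:
  fixes p q :: "'a::{alg_closed_field,field_char_0} poly"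
  assumes q0: "q \<noteq> 0" and p0: "p \<noteq> 0" and ncr: "\<And>x. \<not> (poly p x = 0 \<and> poly q x = 0)"
  shows "\<exists>c. poly q c \<noteq> 0 \<and> good3 c (poly p c / poly q c)"
proof -
  define m where "m = max (degree p) (degree q)"
  have dp: "degree p \<le> m" and dq: "degree q \<le> m" unfolding m_def by auto
  show ?thesis
  proof (cases "\<exists>s. poly (g0 * hom q m - dd * hom p m) s = 0 \<and> s \<noteq> 0 \<and> s \<noteq> -1 \<and> s^2+s+1 \<noteq> 0 \<and> poly g0 s \<noteq> 0")
    case True
    then obtain s where "poly (g0 * hom q m - dd * hom p m) s = 0" "s \<noteq> 0" "s \<noteq> -1" "s^2+s+1 \<noteq> 0" "poly g0 s \<noteq> 0"
      by blast
    thus ?thesis using good_root[OF dp dq ncr] by blast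
  next
    case False
    have "False"
      by (rule core_contra[OF q0 p0 ncr m_def]) (use False in blast)
    thus ?thesis ..
  qed
qed

primrec itq :: "'a::comm_ring_1 poly \<Rightarrow> nat \<Rightarrow> 'a poly" where
  "itq q 0 = q" | "itq q (Suc j) = (itq q j)^2"
primrec itp :: "'a::comm_ring_1 poly \<Rightarrow> 'a poly \<Rightarrow> nat \<Rightarrow> 'a poly" where
  "itp p q 0 = p" | "itp p q (Suc j) = (itp p q j)^2 + [:0,1:] * (itq q j)^2"

definition fc :: "'a::field \<Rightarrow> 'a \<Rightarrow> 'a" where "fc c z = z^2 + c"

lemma itq_nz: "poly q c \<noteq> 0 \<Longrightarrow> poly (itq q j) c \<noteq> (0::'a::field)"
  by (induction j) auto

lemma itq_nz2: "poly (itq q j) c \<noteq> (0::'a::field) \<Longrightarrow> poly q c \<noteq> 0"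
  by (induction j) auto

lemma itq_nz3: "q \<noteq> 0 \<Longrightarrow> itq q j \<noteq> (0::'a::field poly)"
  by (induction j) auto

lemma it_val:
  fixes p q :: "'a::field poly"
  assumes "poly q c \<noteq> 0"
  shows "poly (itp p q j) c / poly (itq q j) c = (fc c ^^ j) (poly p c / poly q c)"
proof (induction j)
  case 0 thus ?case by simp
next
  case (Suc j)
  have nz: "poly (itq q j) c \<noteq> 0" using itq_nz[OF assms] .
  have "poly (itp p q (Suc j)) c / poly (itq q (Suc j)) c = (poly (itp p q j) c / poly (itq q j) c)^2 + c"
    using nz by (simp add: field_simps power2_eq_square)
  thus ?case using Suc by (simp add: fc_def)
qed

lemma it_ncr:
  fixes p q :: "'a::field poly"
  assumes "\<And>x. \<not> (poly p x = 0 \<and> poly q x = 0)"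
  shows "\<not> (poly (itp p q j) x = 0 \<and> poly (itq q j) x = 0)"
proof (induction j)
  case 0 thus ?case using assms by simp
next
  case (Suc j)
  thus ?case by auto
qed

lemma it_nz:
  fixes p q :: "'a::field poly"
  assumes q0: "q \<noteq> 0"
  shows "itp p q (Suc j) \<noteq> 0"
proof
  define P where "P = itp p q j"
  define Q where "Q = itq q j"
  have Q0: "Q \<noteq> 0" unfolding Q_def using itq_nz3[OF q0] .
  assume "itp p q (Suc j) = 0"
  hence s: "P^2 + [:0,1:] * Q^2 = 0" unfolding P_def Q_def by (simp only: itp.simps)
  hence e: "P^2 = - ([:0,1:] * Q^2)" by (simp only: eq_neg_iff_add_eq_0)
  have A: "degree ([:0,1:] * Q^2) = 1 + 2 * degree Q"
    using Q0 by (simp add: degree_mult_eq degree_power_eq)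
  have B: "degree (P^2) = 2 * degree P"
    by (cases "P = 0") (simp_all add: degree_power_eq)
  have C: "degree (P^2) = degree ([:0,1:] * Q^2)" using e by (metis degree_minus)
  have "2 * degree P = 1 + 2 * degree Q" using A B C by simp
  thus False by presburger
qed


lemma f2_iter: "(f2 c ^^ n) (Some v) = Some ((fc c ^^ n) v)"
  by (induction n) (simp_all add: f2_def fc_def)

lemma funpow3: "(f ^^ 3) x = f (f (f x))"
  by (simp add: numeral_3_eq_3)

lemma portrait0_gen:
  assumes w3: "(\<phi>^^3) w = w" and w1: "\<phi> w \<noteq> w" and w2: "\<phi> (\<phi> w) \<noteq> w"
  shows "has_portrait \<phi> w 0 3"
proof -
  have ep: "exact_period \<phi> w 3"
    unfolding exact_period_def
  proof (intro conjI allI impI)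
    fix k :: nat assume "0 < k \<and> k < 3"
    hence "k = 1 \<or> k = 2" by arith
    thus "(\<phi> ^^ k) w \<noteq> w" using w1 w2 by (auto simp: numeral_2_eq_2)
  qed (use w3 in auto)
  have "is_periodic \<phi> w" unfolding is_periodic_def using w3 by (intro exI[of _ 3]) simp
  thus ?thesis using ep unfolding has_portrait_def by simp
qed

lemma orbit3:
  assumes u3: "\<phi> (\<phi> (\<phi> u)) = u"
  shows "(\<phi>^^j) u \<in> {u, \<phi> u, \<phi> (\<phi> u)}"
proof (induction j)
  case 0 thus ?case by simp
next
  case (Suc j)
  thus ?case using u3 by auto
qed

lemma portrait_gen:
  assumes w3: "(\<phi>^^3) w = w" and w1: "\<phi> w \<noteq> w" and w2: "\<phi> (\<phi> w) \<noteq> w"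
    and yw: "\<phi> y = \<phi> w" and ynw: "y \<noteq> w" and xy: "(\<phi>^^(M-1)) x = y" and M1: "M \<ge> 1"
  shows "has_portrait \<phi> x M 3"
proof -
  define u where "u = \<phi> w"
  have w3': "\<phi> (\<phi> (\<phi> w)) = w" using w3 by (simp add: funpow3)
  have Mx: "(\<phi>^^M) x = u"
  proof -
    have "M = Suc (M-1)" using M1 by simp
    hence "(\<phi>^^M) x = (\<phi>^^(Suc (M-1))) x" by (rule arg_cong)
    hence "(\<phi>^^M) x = \<phi> ((\<phi>^^(M-1)) x)" by simp
    thus ?thesis using xy yw u_def by simp
  qed
  have u3: "\<phi> (\<phi> (\<phi> u)) = u" unfolding u_def using w3' by simp
  have ep: "exact_period \<phi> u 3"
    unfolding exact_period_def
  proof (intro conjI allI impI)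
    fix k :: nat assume "0 < k \<and> k < 3"
    hence "k = 1 \<or> k = 2" by arith
    moreover have "\<phi> u \<noteq> u"
    proof
      assume "\<phi> u = u"
      hence "\<phi> (\<phi> u) = u" by simp
      hence "w = u" using w3' unfolding u_def by simp
      thus False using w1 unfolding u_def by simp
    qed
    moreover have "\<phi> (\<phi> u) \<noteq> u"
    proof
      assume "\<phi> (\<phi> u) = u"
      hence "w = u" using w3' unfolding u_def by simp
      thus False using w1 unfolding u_def by simp
    qed
    ultimately show "(\<phi> ^^ k) u \<noteq> u" by (auto simp: numeral_2_eq_2)
  qed (use u3 in \<open>auto simp: funpow3\<close>)
  have per: "is_periodic \<phi> u" unfolding is_periodic_def using u3 by (intro exI[of _ 3]) (simp add: funpow3)
  have np: "\<not> is_periodic \<phi> ((\<phi>^^m) x)" if mM: "m < M" for m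
  proof
    assume "is_periodic \<phi> ((\<phi>^^m) x)"
    then obtain n where n: "n > 0" "(\<phi>^^n) ((\<phi>^^m) x) = (\<phi>^^m) x" unfolding is_periodic_def by blast
    have fe: "(\<phi>^^(M-1)) = (\<phi>^^(M-1-m)) \<circ> (\<phi>^^m)"
    proof -
      have "M - 1 = (M-1-m) + m" using mM by simp
      hence "(\<phi>^^(M-1)) = (\<phi>^^((M-1-m) + m))" by (rule arg_cong)
      thus ?thesis by (simp only: funpow_add)
    qed
    have yeq: "y = (\<phi>^^(M-1-m)) ((\<phi>^^m) x)"
      using xy fe by (metis comp_apply)
    have comm: "(\<phi>^^n) \<circ> (\<phi>^^(M-1-m)) = (\<phi>^^(M-1-m)) \<circ> (\<phi>^^n)"
      by (simp only: funpow_add[symmetric] add.commute)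
    have yper: "(\<phi>^^n) y = y"
    proof -
      have "(\<phi>^^n) y = (\<phi>^^(M-1-m)) ((\<phi>^^n) ((\<phi>^^m) x))"
        unfolding yeq using comm by (metis comp_apply)
      thus ?thesis using n(2) yeq by simp
    qed
    have "y = (\<phi>^^(n-1)) (\<phi> y)"
    proof -
      have nn: "n = Suc (n-1)" using n(1) by simp
      have "(\<phi>^^n) y = (\<phi>^^(Suc (n-1))) y" using nn by (rule arg_cong)
      also have "\<dots> = (\<phi>^^(n-1)) (\<phi> y)" by (simp only: funpow_Suc_right comp_apply)
      finally show ?thesis using yper by simp
    qed
    hence "y \<in> {u, \<phi> u, \<phi> (\<phi> u)}" using orbit3[of \<phi> u "n-1", OF u3] yw u_def by simp
    moreover have "\<phi> (\<phi> u) = w" unfolding u_def using w3' .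
    ultimately show False
    proof (elim insertE)
      assume "y = u"
      hence "\<phi> (\<phi> w) = \<phi> w" using yw unfolding u_def by simp
      hence "w = \<phi> w" using w3' by simp
      thus False using w1 by simp
    next
      assume "y = \<phi> u"
      hence "\<phi> y = w" using w3' unfolding u_def by simp
      hence "w = \<phi> w" using yw by simp
      thus False using w1 by simp
    next
      assume "y = \<phi> (\<phi> u)"
      thus False using ynw \<open>\<phi> (\<phi> u) = w\<close> by simp
    qed simp
  qed
  show ?thesis unfolding has_portrait_def using Mx ep per np by simp
qed


lemma fract_norm:
  fixes \<alpha> :: "'a::field poly fract"
  shows "\<exists>p q. \<alpha> = Fract p q \<and> q \<noteq> 0 \<and> (\<forall>x. \<not> (poly p x = 0 \<and> poly q x = 0))"
proof -
  define P where "P n \<longleftrightarrow> (\<exists>p q. \<alpha> = Fract p q \<and> q \<noteq> 0 \<and> degree q = n)" for n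
  obtain p0 q0 where "\<alpha> = Fract p0 q0" "q0 \<noteq> 0" by (cases \<alpha>) auto
  hence "P (degree q0)" unfolding P_def by blast
  hence PL: "P (LEAST n. P n)" by (rule LeastI)
  then obtain p q where pq: "\<alpha> = Fract p q" "q \<noteq> 0" "degree q = (LEAST n. P n)" unfolding P_def by blast
  have "\<forall>x. \<not> (poly p x = 0 \<and> poly q x = 0)"
  proof (intro allI notI)
    fix x assume h: "poly p x = 0 \<and> poly q x = 0"
    then obtain p' where p': "p = [:-x,1:] * p'" by (metis dvdE poly_eq_0_iff_dvd)
    obtain q' where q': "q = [:-x,1:] * q'" using h by (metis dvdE poly_eq_0_iff_dvd)
    have q'0: "q' \<noteq> 0" using q' pq(2) by auto
    have "Fract p q = Fract p' q'"
      using pq(2) q'0 by (simp add: eq_fract p' q' algebra_simps)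
    hence "P (degree q')" unfolding P_def using pq(1) q'0 by blast
    hence "(LEAST n. P n) \<le> degree q'" by (rule Least_le)
    moreover have "degree q = degree [:-x,(1::'a):] + degree q'" unfolding q' by (rule degree_mult_eq) (use q'0 in auto)
    ultimately show False using pq(3) by simp
  qed
  thus ?thesis using pq by blast
qed

lemma place_eval_Fract:
  fixes p q :: "'a::field poly"
  assumes q0: "q \<noteq> 0" and qc: "poly q c \<noteq> 0"
  shows "place_eval (Fract p q) c = Some (poly p c / poly q c)"
proof -
  have ex: "\<exists>p' q'. Fract p q = Fract p' q' \<and> poly q' c \<noteq> 0" using qc by blast
  have "(THE v. \<exists>p' q'. Fract p q = Fract p' q' \<and> poly q' c \<noteq> 0 \<and> v = poly p' c / poly q' c) = poly p c / poly q c"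
  proof (rule the_equality)
    show "\<exists>p' q'. Fract p q = Fract p' q' \<and> poly q' c \<noteq> 0 \<and> poly p c / poly q c = poly p' c / poly q' c"
      using qc by blast
  next
    fix v assume "\<exists>p' q'. Fract p q = Fract p' q' \<and> poly q' c \<noteq> 0 \<and> v = poly p' c / poly q' c"
    then obtain p' q' where h: "Fract p q = Fract p' q'" "poly q' c \<noteq> 0" "v = poly p' c / poly q' c" by blast
    have q'0: "q' \<noteq> 0" using h(2) by auto
    have "p * q' = p' * q" using h(1) q0 q'0 by (simp add: eq_fract)
    hence e: "poly p c * poly q' c = poly p' c * poly q c" by (metis poly_mult)
    have "v * poly q' c = poly p' c" using h(2,3) by simp
    hence "poly p c * poly q' c = (v * poly q c) * poly q' c" using e by (simp add: algebra_simps)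
    hence "poly p c = v * poly q c" using h(2) by simp
    thus "v = poly p c / poly q c" using qc by (simp add: field_simps)
  qed
  thus ?thesis unfolding place_eval_def using ex by simp
qed

lemma place_eval_0: "place_eval (0::'a::field poly fract) c = Some 0"
  using place_eval_Fract[of "1::'a poly" c 0] by (simp add: Zero_fract_def)

lemma Fract_eq_0: "q \<noteq> 0 \<Longrightarrow> Fract p q = 0 \<longleftrightarrow> p = (0::'a::idom)"
  by (simp add: Zero_fract_def eq_fract)

lemma good3_fc:
  assumes "good3 c y"
  shows "(fc c ^^ 3) y = y" "fc c y \<noteq> y" "fc c (fc c y) \<noteq> y" "y \<noteq> 0"
  using assms unfolding good3_def by (simp_all add: funpow3 fc_def)

theorem proposition5p11:
  fixes \<alpha> :: "'k::{alg_closed_field, field_char_0} poly fract" and M :: nat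
  shows "realizes_f2 \<alpha> M 3 \<longleftrightarrow> (\<alpha>, M) \<noteq> (0, 1)"
proof
  assume R: "realizes_f2 \<alpha> M 3"
  show "(\<alpha>, M) \<noteq> (0, 1)"
  proof
    assume "(\<alpha>, M) = (0, 1)"
    hence a0: "\<alpha> = 0" and M1: "M = 1" by auto
    obtain c where hp: "has_portrait (f2 c) (place_eval \<alpha> c) M 3"
      using R unfolding realizes_f2_def by blast
    hence hp': "has_portrait (f2 c) (Some 0) 1 3" using a0 M1 by (simp add: place_eval_0)
    have ep: "exact_period (f2 c) (f2 c (Some 0)) 3" and np: "\<not> is_periodic (f2 c) (Some 0)"
      using hp' unfolding has_portrait_def by auto
    have "(f2 c ^^ 3) (f2 c (Some 0)) = f2 c (Some 0)" using ep unfolding exact_period_def by simp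
    hence e: "((c^2+c)^2+c)^2 + c = c" by (simp add: funpow3 f2_def)
    hence "((c^2+c)^2+c)^2 = 0" by simp
    hence "(c^2+c)^2+c = 0" by simp
    hence "(f2 c ^^ 3) (Some 0) = Some 0" by (simp add: funpow3 f2_def)
    hence "is_periodic (f2 c) (Some 0)" unfolding is_periodic_def by (intro exI[of _ 3]) simp
    thus False using np by simp
  qed
next
  assume ne: "(\<alpha>, M) \<noteq> (0, 1)"
  obtain p q where pq: "\<alpha> = Fract p q" "q \<noteq> 0" and ncr: "\<And>x. \<not> (poly p x = 0 \<and> poly q x = 0)"
    using fract_norm[of \<alpha>] by blast
  show "realizes_f2 \<alpha> M 3"
  proof (cases M)
    case 0
    show ?thesis
    proof (cases "p = 0")
      case True
      hence a0: "\<alpha> = 0" using pq by (simp add: Fract_eq_0)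
      have "degree (g0::'k poly) > 0" by (simp add: g0_def)
      then obtain c where c: "poly g0 c = (0::'k)" using alg_closed_imp_poly_has_root by blast
      have c0: "c \<noteq> 0" using c by (auto simp: ev_g0)
      have c1: "c + 1 \<noteq> 0" using c by (auto simp: ev_g0 add_eq_0_iff2)
      have "c^2 + c = c * (c + 1)" by (simp add: power2_eq_square algebra_simps)
      hence c2: "c^2 + c \<noteq> 0" using c0 c1 by simp
      have "(c^2+c)^2+c = c * poly g0 c" by (simp add: ev_g0; algebra)
      hence c3: "(c^2+c)^2+c = 0" using c by simp
      have "has_portrait (f2 c) (Some 0) 0 3"
        by (rule portrait0_gen) (use c0 c2 c3 in \<open>simp_all add: funpow3 f2_def\<close>)
      thus ?thesis unfolding realizes_f2_def using a0 place_eval_0 0 by metis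
    next
      case False
      obtain c where c: "poly q c \<noteq> 0" "good3 c (poly p c / poly q c)"
        using core_exists[OF pq(2) False ncr] by blast
      define y where "y = poly p c / poly q c"
      have pe: "place_eval \<alpha> c = Some y" unfolding y_def pq(1) by (rule place_eval_Fract[OF pq(2) c(1)])
      have g: "(fc c ^^ 3) y = y" "fc c y \<noteq> y" "fc c (fc c y) \<noteq> y" using good3_fc[OF c(2)] unfolding y_def by auto
      have "has_portrait (f2 c) (Some y) 0 3"
        by (rule portrait0_gen) (use g in \<open>simp_all add: f2_iter f2_def fc_def\<close>)
      thus ?thesis unfolding realizes_f2_def using pe 0 by metis
    qed
  next
    case (Suc n)
    define P where "P = itp p q n"
    define Q where "Q = itq q n"
    have Q0: "Q \<noteq> 0" unfolding Q_def using itq_nz3[OF pq(2)] .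
    have P0: "- P \<noteq> 0"
    proof (cases n)
      case 0
      have "p \<noteq> 0"
      proof
        assume "p = 0"
        hence "\<alpha> = 0" using pq by (simp add: Fract_eq_0)
        thus False using ne Suc 0 by simp
      qed
      thus ?thesis unfolding P_def using 0 by simp
    next
      case (Suc k)
      have "itp p q (Suc k) \<noteq> 0" by (rule it_nz[OF pq(2)])
      thus ?thesis unfolding P_def using Suc by (metis neg_equal_0_iff_equal)
    qed
    have ncr': "\<And>x. \<not> (poly (-P) x = 0 \<and> poly Q x = 0)"
      using it_ncr[OF ncr] unfolding P_def Q_def by simp
    obtain c where c: "poly Q c \<noteq> 0" "good3 c (poly (-P) c / poly Q c)"
      using core_exists[OF Q0 P0 ncr'] by blast
    have qc: "poly q c \<noteq> 0" using itq_nz2 c(1) unfolding Q_def by blast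
    define v where "v = poly p c / poly q c"
    have pe: "place_eval \<alpha> c = Some v" unfolding v_def pq(1) by (rule place_eval_Fract[OF pq(2) qc])
    define y0 where "y0 = poly P c / poly Q c"
    have yv: "(fc c ^^ n) v = y0" unfolding y0_def v_def P_def Q_def using it_val[OF qc] by simp
    have w0: "poly (-P) c / poly Q c = - y0" unfolding y0_def by simp
    have g: "(fc c ^^ 3) (-y0) = -y0" "fc c (-y0) \<noteq> -y0" "fc c (fc c (-y0)) \<noteq> -y0" "-y0 \<noteq> 0"
      using good3_fc[OF c(2)] unfolding w0 by auto
    have ny: "y0 \<noteq> - y0" using g(4) by auto
    have "has_portrait (f2 c) (Some v) M 3"
    proof (rule portrait_gen[where w = "Some (-y0)" and y = "Some y0"])
      show "(f2 c ^^ 3) (Some (- y0)) = Some (- y0)" using g(1) by (simp add: f2_iter)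
      show "f2 c (Some (- y0)) \<noteq> Some (- y0)" using g(2) by (simp add: f2_def fc_def)
      show "f2 c (f2 c (Some (- y0))) \<noteq> Some (- y0)" using g(3) by (simp add: f2_def fc_def)
      show "f2 c (Some y0) = f2 c (Some (- y0))" by (simp add: f2_def)
      show "Some y0 \<noteq> Some (- y0)" using ny by simp
      show "(f2 c ^^ (M - 1)) (Some v) = Some y0" using yv Suc by (simp add: f2_iter)
      show "1 \<le> M" using Suc by simp
    qed
    thus ?thesis unfolding realizes_f2_def using pe by metis
  qed
qed


end
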